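(* For every $n_0>3$ there exist asymptotically polytropic equations of state having $n_0$ as their low-pressure asymptotic index such that some of the corresponding regular perfect fluid solutions have infinite radius (i.e. $p(r)>0$ for all $r>0$).
   Context: Equation of state: a barotropic relation $\rho=\rho(p)$ with $\rho>0$ for $p>0$ and $\eta(p)=\int_0^p dp'/\rho(p')$ finite for $p>0$. Index function: $n(\eta)=\frac{\eta}{\rho}\frac{d\rho}{d\eta}$. Asymptotically polytropic with indices $n_0,n_1$: $n$ bounded and non-negative, $n(\eta)\to n_0$ (with error $O(\eta^{a_0})$, $a_0>0$) as $\eta\to0$ and $n(\eta)\to n_1$ (error $O(\eta^{-a_1})$) as $\eta\to\infty$; the examples in the paper are composite equations of state, with $n(\eta)=n_0$ for $\eta\le\eta_j$ and $n(\eta)=n_1$ (a constant slightly greater than 5) for $\eta>\eta_j$. Regular perfect fluid solution: solution of $dm/dr=4\pi r^2\rho(p)$, $dp/dr=-m\rho(p)/r^2$ with $m\to0$ and $p\to p_c\in(0,\infty)$ as $r\to0$. *)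

theory Defs
  imports "HOL-Analysis.Analysis" "HOL-Library.Landau_Symbols"
begin

definition eta_of :: "(real \<Rightarrow> real) \<Rightarrow> real \<Rightarrow> real" where
  "eta_of rho p = integral {0..p} (\<lambda>q. 1 / rho q)"

definition is_eos :: "(real \<Rightarrow> real) \<Rightarrow> bool" where
  "is_eos rho \<longleftrightarrow> (\<forall>p>0. rho p > 0) \<and> (\<forall>p>0. (\<lambda>q. 1 / rho q) integrable_on {0..p})"

text \<open>rho as a function of eta (eta is strictly increasing in p).\<close>
definition rho_of_eta :: "(real \<Rightarrow> real) \<Rightarrow> real \<Rightarrow> real" where
  "rho_of_eta rho e = rho (THE p. p > 0 \<and> eta_of rho p = e)"

text \<open>n is the index function n(eta) = eta / rho * d rho / d eta; the derivative is
  required to exist except at finitely many eta (composite equations of state).\<close>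
definition index_function :: "(real \<Rightarrow> real) \<Rightarrow> (real \<Rightarrow> real) \<Rightarrow> bool" where
  "index_function rho n \<longleftrightarrow>
     continuous_on {0<..} (rho_of_eta rho) \<and>
     (\<exists>S. finite S \<and> (\<forall>e>0. e \<notin> S \<longrightarrow>
        (rho_of_eta rho has_real_derivative (rho_of_eta rho e * n e / e)) (at e)))"

definition asympt_polytropic :: "(real \<Rightarrow> real) \<Rightarrow> real \<Rightarrow> real \<Rightarrow> bool" where
  "asympt_polytropic rho n0 n1 \<longleftrightarrow>
     is_eos rho \<and> filterlim (eta_of rho) at_top at_top \<and>
     (\<exists>n a0 a1. index_function rho n \<and>
        bounded (n ` {0<..}) \<and> (\<forall>e>0. n e \<ge> 0) \<and> a0 > 0 \<and> a1 > 0 \<and>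
        (\<lambda>e. n e - n0) \<in> O[at_right 0](\<lambda>e. e powr a0) \<and>
        (\<lambda>e. n e - n1) \<in> O[at_top](\<lambda>e. e powr (- a1)))"

definition regular_solution ::
  "(real \<Rightarrow> real) \<Rightarrow> (real \<Rightarrow> real) \<Rightarrow> (real \<Rightarrow> real) \<Rightarrow> ereal \<Rightarrow> bool" where
  "regular_solution rho m p R \<longleftrightarrow> 0 < R \<and>
     (\<forall>r>0. ereal r < R \<longrightarrow> p r > 0 \<and>
        (m has_real_derivative (4 * pi * r\<^sup>2 * rho (p r))) (at r) \<and>
        (p has_real_derivative (- m r * rho (p r) / r\<^sup>2)) (at r)) \<and>
     (m \<longlongrightarrow> 0) (at_right 0) \<and>
     (\<exists>pc. 0 < pc \<and> (p \<longlongrightarrow> pc) (at_right 0))"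

end

theory Submission
  imports Defs
begin

context
  fixes n0 :: real
  assumes n0: "n0 > 3"
begin

definition "aa = 1 / (n0 - 1)"
definition "kk = n0 - 1"
definition "c1 = aa * (1 - 2 * aa) / (2 * pi)"
definition "c2 = aa * (1 + aa) / pi"
definition "rt e = e powr n0 * (c1 + c2 * e powr kk)"
definition "PP e = c1 / (n0 + 1) * e powr (n0 + 1) + c2 / (n0 + kk + 1) * e powr (n0 + kk + 1)"
definition "EE p = (THE e. e \<ge> 0 \<and> PP e = p)"
definition "rh p = rt (EE p)"
definition "nn e = n0 + kk * c2 * e powr kk / (c1 + c2 * e powr kk)"

lemma aa_pos: "aa > 0" and aa_half: "aa < 1/2" and aa_kk: "aa * kk = 1" and kk_pos: "kk > 2"
  using n0 by (auto simp: aa_def kk_def field_simps)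

lemma c1_pos: "c1 > 0" and c2_pos: "c2 > 0"
  using aa_pos aa_half by (auto simp: c1_def c2_def intro!: divide_pos_pos mult_pos_pos)

lemma PP_0: "PP 0 = 0"
  using n0 kk_pos by (simp add: PP_def)

lemma PP_cont: "continuous_on {0..} PP"
  unfolding PP_def using n0 kk_pos
  by (intro continuous_intros continuous_on_powr') auto

lemma PP_deriv: "e > 0 \<Longrightarrow> (PP has_real_derivative rt e) (at e)"
proof -
  assume e: "e > 0"
  have "(PP has_real_derivative c1 / (n0 + 1) * ((n0 + 1) * e powr (n0 + 1 - 1)) +
      c2 / (n0 + kk + 1) * ((n0 + kk + 1) * e powr (n0 + kk + 1 - 1))) (at e)"
    unfolding PP_def using e by (auto intro!: derivative_eq_intros)
  moreover have a: "c1 / (n0 + 1) * ((n0 + 1) * y) = c1 * y" for y using n0 by simp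
  moreover have b: "c2 / (n0 + kk + 1) * ((n0 + kk + 1) * y) = c2 * y" for y using n0 kk_pos by simp
  moreover have "c1 * e powr (n0 + 1 - 1) + c2 * e powr (n0 + kk + 1 - 1) = rt e"
    by (simp add: rt_def powr_add algebra_simps)
  ultimately show ?thesis by (simp only: a b)
qed

lemma rt_pos: "e > 0 \<Longrightarrow> rt e > 0"
  using c1_pos c2_pos by (auto simp: rt_def intro!: mult_pos_pos add_pos_nonneg)

lemma PP_mono: "0 \<le> x \<Longrightarrow> x < y \<Longrightarrow> PP x < PP y"
  unfolding PP_def using n0 kk_pos c1_pos c2_pos
  by (intro add_strict_mono mult_strict_left_mono powr_less_mono2) auto

lemma PP_le_iff: "0 \<le> x \<Longrightarrow> 0 \<le> y \<Longrightarrow> PP x \<le> PP y \<longleftrightarrow> x \<le> y"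
  by (metis PP_mono linorder_not_le order_le_less order_less_imp_le)

lemma PP_inj: "0 \<le> x \<Longrightarrow> 0 \<le> y \<Longrightarrow> PP x = PP y \<Longrightarrow> x = y"
  by (metis PP_le_iff order_antisym order_refl)

lemma PP_nonneg: "0 \<le> x \<Longrightarrow> 0 \<le> PP x"
  using PP_le_iff[of 0 x] PP_0 by simp

lemma PP_pos: "0 < x \<Longrightarrow> 0 < PP x"
  using PP_mono[of 0 x] PP_0 by simp

lemma PP_ge: "1 \<le> x \<Longrightarrow> c1 / (n0 + 1) * x \<le> PP x"
proof -
  assume x: "1 \<le> x"
  have "x = x powr 1" using x by simp
  also have "\<dots> \<le> x powr (n0 + 1)" using x n0 by (intro powr_mono) auto
  finally have "c1 / (n0 + 1) * x \<le> c1 / (n0 + 1) * x powr (n0 + 1)"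
    using c1_pos n0 by (intro mult_left_mono) auto
  moreover have "0 \<le> c2 / (n0 + kk + 1) * x powr (n0 + kk + 1)"
    using c2_pos n0 kk_pos by auto
  ultimately show ?thesis unfolding PP_def by linarith
qed

lemma PP_ex: "0 \<le> p \<Longrightarrow> \<exists>e\<ge>0. PP e = p"
proof -
  assume p: "0 \<le> p"
  define b where "b = max 1 (p * (n0 + 1) / c1)"
  have "c1 * (p * (n0 + 1) / c1) \<le> c1 * b"
    using c1_pos by (intro mult_left_mono) (auto simp: b_def)
  then have "p * (n0 + 1) \<le> c1 * b" using c1_pos by simp
  then have "p \<le> c1 / (n0 + 1) * b"
    using n0 by (simp add: field_simps)
  also have "\<dots> \<le> PP b" by (rule PP_ge) (simp add: b_def)
  finally have "p \<le> PP b" .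
  moreover have "continuous_on {0..b} PP"
    by (rule continuous_on_subset[OF PP_cont]) auto
  moreover have "0 \<le> b" by (simp add: b_def)
  ultimately have "\<exists>x. 0 \<le> x \<and> x \<le> b \<and> PP x = p"
    using p PP_0 by (intro IVT') auto
  then show ?thesis by auto
qed

lemma EE_prop: "0 \<le> p \<Longrightarrow> EE p \<ge> 0 \<and> PP (EE p) = p"
proof -
  assume p: "0 \<le> p"
  obtain e where e: "e \<ge> 0" "PP e = p" using PP_ex[OF p] by blast
  have "\<exists>!e. e \<ge> 0 \<and> PP e = p"
  proof (rule ex1I[of _ e])
    show "e \<ge> 0 \<and> PP e = p" using e by simp
  next
    fix y assume "y \<ge> 0 \<and> PP y = p"
    then show "y = e" using PP_inj[of y e] e by auto
  qed
  then show ?thesis unfolding EE_def by (rule theI')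
qed

lemma EE_PP: "0 \<le> e \<Longrightarrow> EE (PP e) = e"
proof -
  assume e: "0 \<le> e"
  have h: "EE (PP e) \<ge> 0 \<and> PP (EE (PP e)) = PP e" using EE_prop PP_nonneg e by blast
  then show ?thesis using PP_inj[of "EE (PP e)" e] e by blast
qed

lemma EE_0: "EE 0 = 0"
  using EE_PP[of 0] PP_0 by simp

lemma EE_pos: "0 < p \<Longrightarrow> 0 < EE p"
  using EE_prop[of p] PP_0 by (metis order_le_less order_less_irrefl)

lemma EE_cont: "0 \<le> p \<Longrightarrow> continuous_on {0..p} EE"
proof -
  assume p: "0 \<le> p"
  have img: "PP ` {0..EE p} = {0..p}"
  proof
    show "PP ` {0..EE p} \<subseteq> {0..p}"
    proof
      fix y assume "y \<in> PP ` {0..EE p}"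
      then obtain x where x: "0 \<le> x" "x \<le> EE p" "y = PP x" by auto
      then show "y \<in> {0..p}"
        using PP_nonneg[of x] PP_le_iff[of x "EE p"] EE_prop[OF p] by auto
    qed
  next
    show "{0..p} \<subseteq> PP ` {0..EE p}"
    proof
      fix q assume q: "q \<in> {0..p}"
      then have "EE q \<ge> 0" "PP (EE q) = q" using EE_prop[of q] by auto
      moreover have "EE q \<le> EE p"
        using PP_le_iff[of "EE q" "EE p"] EE_prop[OF p] q calculation by auto
      ultimately show "q \<in> PP ` {0..EE p}" by (metis atLeastAtMost_iff image_eqI)
    qed
  qed
  have "continuous_on (PP ` {0..EE p}) EE"
    by (rule continuous_on_inv) (auto intro: continuous_on_subset[OF PP_cont] EE_PP)
  then show ?thesis using img by simp
qed

lemma EE_deriv: "0 < p \<Longrightarrow> (EE has_real_derivative inverse (rt (EE p))) (at p)"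
proof -
  assume p: "0 < p"
  have ep: "EE p > 0" using EE_pos[OF p] .
  have zp: "z > 0" if "\<bar>z - EE p\<bar> \<le> EE p / 2" for z
  proof -
    have "- (z - EE p) \<le> EE p / 2" using that by (rule abs_le_D2)
    then show "z > 0" using ep by linarith
  qed
  have inj: "EE (PP z) = z" if "\<bar>z - EE p\<bar> \<le> EE p / 2" for z
    using EE_PP zp[OF that] by auto
  have cont: "isCont PP z" if "\<bar>z - EE p\<bar> \<le> EE p / 2" for z
    using PP_deriv[OF zp[OF that]] by (rule DERIV_isCont)
  have "isCont EE (PP (EE p))"
    by (rule isCont_inverse_function[where d = "EE p / 2", OF _ inj cont]) (use ep in auto)
  then have c: "isCont EE p" using EE_prop p by simp
  show ?thesis
  proof (rule DERIV_inverse_function[where f = PP and a = 0 and b = "p + 1"])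
    show "(PP has_real_derivative rt (EE p)) (at (EE p))" using PP_deriv[OF ep] .
    show "rt (EE p) \<noteq> 0" using rt_pos[OF ep] by simp
  qed (use p c EE_prop in auto)
qed

lemma eta_rh: "0 \<le> p \<Longrightarrow> ((\<lambda>q. 1 / rh q) has_integral EE p) {0..p}"
proof -
  assume p: "0 \<le> p"
  have "((\<lambda>q. 1 / rh q) has_integral (EE p - EE 0)) {0..p}"
  proof (rule fundamental_theorem_of_calculus_interior_strong[where S = "{}"])
    fix x assume "x \<in> {0<..<p} - {}"
    then have x: "x > 0" by auto
    show "(EE has_vector_derivative 1 / rh x) (at x)"
      using EE_deriv[OF x] unfolding has_real_derivative_iff_has_vector_derivative[symmetric]
      by (simp add: rh_def inverse_eq_divide)
  qed (use p EE_cont in auto)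
  then show ?thesis using EE_0 by simp
qed

lemma eta_of_rh: "0 \<le> p \<Longrightarrow> eta_of rh p = EE p"
  unfolding eta_of_def using eta_rh by (rule integral_unique)

lemma is_eos_rh: "is_eos rh"
  unfolding is_eos_def
proof (intro conjI allI impI)
  fix p :: real assume p: "p > 0"
  show "rh p > 0" using rt_pos EE_pos p by (simp add: rh_def)
  show "(\<lambda>q. 1 / rh q) integrable_on {0..p}"
    using eta_rh[of p] p by (auto intro: has_integral_integrable)
qed

lemma eta_top: "filterlim (eta_of rh) at_top at_top"
  unfolding filterlim_at_top eventually_at_top_linorder
proof
  fix Z
  show "\<exists>N. \<forall>p\<ge>N. Z \<le> eta_of rh p"
  proof (intro exI allI impI)
    fix p assume p: "PP (max Z 1) \<le> p"
    have p0: "0 \<le> p" using p PP_nonneg[of "max Z 1"] by linarith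
    have "PP (max Z 1) \<le> PP (EE p)" using p EE_prop[OF p0] by simp
    then have "max Z 1 \<le> EE p" using PP_le_iff[of "max Z 1" "EE p"] EE_prop[OF p0] by auto
    then show "Z \<le> eta_of rh p" using eta_of_rh[OF p0] by simp
  qed
qed

lemma roe: "0 < e \<Longrightarrow> rho_of_eta rh e = rt e"
proof -
  assume e: "0 < e"
  have "(THE p. p > 0 \<and> eta_of rh p = e) = PP e"
  proof (rule the_equality)
    show "PP e > 0 \<and> eta_of rh (PP e) = e"
      using PP_pos[OF e] eta_of_rh[of "PP e"] EE_PP[of e] e by auto
  next
    fix p assume "p > 0 \<and> eta_of rh p = e"
    then show "p = PP e" using eta_of_rh[of p] EE_prop[of p] by auto
  qed
  then show ?thesis unfolding rho_of_eta_def rh_def using EE_PP[of e] e by simp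
qed

lemma rt_deriv: "0 < e \<Longrightarrow> (rt has_real_derivative rt e * nn e / e) (at e)"
proof -
  assume e: "0 < e"
  have D: "(rt has_real_derivative n0 * e powr (n0 - 1) * (c1 + c2 * e powr kk) +
           e powr n0 * (c2 * (kk * e powr (kk - 1)))) (at e)"
    unfolding rt_def using e by (auto intro!: derivative_eq_intros)
  have p1: "e powr (n0 - 1) = e powr n0 / e" and p2: "e powr (kk - 1) = e powr kk / e"
    using e by (simp_all add: powr_diff)
  have d: "c1 + c2 * e powr kk > 0" using c1_pos c2_pos by (auto intro: add_pos_nonneg)
  have eq: "n0 * e powr (n0 - 1) * (c1 + c2 * e powr kk) +
           e powr n0 * (c2 * (kk * e powr (kk - 1))) = rt e * nn e / e"
  proof -
    have k: "(c1 + c2 * e powr kk) * (n0 + kk * c2 * e powr kk / (c1 + c2 * e powr kk))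
        = (c1 + c2 * e powr kk) * n0 + kk * c2 * e powr kk"
      using d by (simp add: distrib_left)
    have r: "rt e * nn e / e = e powr n0 * ((c1 + c2 * e powr kk) * n0 + kk * c2 * e powr kk) / e"
      unfolding rt_def nn_def k[symmetric] by (simp add: mult.assoc)
    have "n0 * (e powr n0 / e) * (c1 + c2 * e powr kk) +
           e powr n0 * (c2 * (kk * (e powr kk / e))) =
        e powr n0 * ((c1 + c2 * e powr kk) * n0 + kk * c2 * e powr kk) / e"
      using e by (simp add: field_simps)
    then show ?thesis unfolding p1 p2 r .
  qed
  show ?thesis using D unfolding eq .
qed

lemma index_rh: "index_function rh nn"
  unfolding index_function_def
proof (intro conjI exI[of _ "{}"])
  have "continuous_on {0<..} rt"
    unfolding rt_def by (intro continuous_intros) auto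
  then show "continuous_on {0<..} (rho_of_eta rh)"
    by (rule continuous_on_cong[THEN iffD1, rotated 2]) (auto simp: roe)
  show "\<forall>e>0. e \<notin> {} \<longrightarrow> (rho_of_eta rh has_real_derivative rho_of_eta rh e * nn e / e) (at e)"
  proof (intro allI impI)
    fix e :: real assume e: "e > 0"
    show "(rho_of_eta rh has_real_derivative rho_of_eta rh e * nn e / e) (at e)"
      using has_field_derivative_transform_within_open[OF rt_deriv[OF e], of "{0<..}" "rho_of_eta rh"]
        e roe by auto
  qed
qed simp

lemma nn_bounds: "0 < e \<Longrightarrow> n0 \<le> nn e \<and> nn e \<le> n0 + kk"
proof -
  assume e: "0 < e"
  have d: "c1 + c2 * e powr kk > 0" using c1_pos c2_pos by (auto intro: add_pos_nonneg)
  define q where "q = c2 * e powr kk / (c1 + c2 * e powr kk)"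
  have q0: "0 \<le> q" using d c2_pos by (auto simp: q_def)
  have q1: "q \<le> 1" using d c1_pos by (auto simp: q_def)
  have a: "0 \<le> kk * q" using q0 kk_pos by simp
  have b: "kk * q \<le> kk" using q1 kk_pos mult_left_le[of q kk] by simp
  have "nn e = n0 + kk * q" unfolding nn_def q_def by simp
  then show ?thesis using a b by simp
qed

lemma nn_bdd: "bounded (nn ` {0<..})"
  unfolding bounded_real using nn_bounds n0 kk_pos
  by (intro exI[of _ "n0 + kk"]) fastforce

lemma nn_low: "(\<lambda>e. nn e - n0) \<in> O[at_right 0](\<lambda>e. e powr kk)"
proof (rule bigoI[where c = "kk * c2 / c1"])
  show "\<forall>\<^sub>F x in at_right 0. norm (nn x - n0) \<le> kk * c2 / c1 * norm (x powr kk)"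
  proof (rule eventually_mono[OF eventually_at_right_less])
    fix e :: real assume e: "0 < e"
    have d: "c1 \<le> c1 + c2 * e powr kk" using c2_pos by auto
    have dp: "0 < c1 + c2 * e powr kk" using c1_pos c2_pos by (auto intro: add_pos_nonneg)
    have h1: "kk * c2 * e powr kk / (c1 + c2 * e powr kk) \<le> kk * c2 * e powr kk / c1"
      using d dp c1_pos c2_pos kk_pos by (intro divide_left_mono mult_pos_pos) auto
    have h0: "0 \<le> kk * c2 * e powr kk / (c1 + c2 * e powr kk)"
      using dp c1_pos c2_pos kk_pos by auto
    have A: "norm (nn e - n0) = kk * c2 * e powr kk / (c1 + c2 * e powr kk)"
      unfolding nn_def add_diff_cancel_left' real_norm_def using abs_of_nonneg[OF h0] .
    have B: "kk * c2 / c1 * norm (e powr kk) = kk * c2 * e powr kk / c1"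
      by simp
    show "norm (nn e - n0) \<le> kk * c2 / c1 * norm (e powr kk)"
      unfolding A B using h1 .
  qed
qed

lemma nn_high: "(\<lambda>e. nn e - (n0 + kk)) \<in> O[at_top](\<lambda>e. e powr (- kk))"
proof (rule bigoI[where c = "kk * c1 / c2"])
  show "\<forall>\<^sub>F x in at_top. norm (nn x - (n0 + kk)) \<le> kk * c1 / c2 * norm (x powr (- kk))"
  proof (rule eventually_mono[OF eventually_gt_at_top[of 0]])
    fix e :: real assume e: "0 < e"
    have d: "c1 + c2 * e powr kk > 0" using c1_pos c2_pos by (auto intro: add_pos_nonneg)
    have ep: "e powr kk > 0" using e by simp
    have eq: "nn e - (n0 + kk) = - (kk * c1 / (c1 + c2 * e powr kk))"
      using d unfolding nn_def by (simp add: field_simps)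
    have "kk * c1 / (c1 + c2 * e powr kk) \<le> kk * c1 / (c2 * e powr kk)"
      using d c1_pos c2_pos kk_pos ep by (intro divide_left_mono) auto
    also have "\<dots> = kk * c1 / c2 * e powr (- kk)"
      using ep by (simp add: powr_minus field_simps)
    finally show "norm (nn e - (n0 + kk)) \<le> kk * c1 / c2 * norm (e powr (- kk))"
      using eq d c1_pos kk_pos by simp
  qed
qed

lemma ap: "asympt_polytropic rh n0 (n0 + kk)"
proof -
  have nonneg: "\<forall>e>0. nn e \<ge> 0"
  proof (intro allI impI)
    fix e :: real assume "e > 0"
    then have "n0 \<le> nn e" using nn_bounds by blast
    then show "nn e \<ge> 0" using n0 by linarith
  qed
  have kp: "kk > 0" using kk_pos by linarith
  show ?thesis
    unfolding asympt_polytropic_def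
    apply (rule conjI, rule is_eos_rh, rule conjI, rule eta_top)
    apply (rule exI[of _ nn], rule exI[of _ kk], rule exI[of _ kk])
    apply (intro conjI index_rh nn_bdd nonneg kp nn_low nn_high)
    done
qed


definition ww :: "real \<Rightarrow> real" where "ww r = 1 + r^2"
definition et :: "real \<Rightarrow> real" where "et r = ww r powr (- aa)"
definition mm :: "real \<Rightarrow> real" where "mm r = 2 * aa * r^3 * ww r powr (- aa - 1)"
definition "pp r = PP (et r)"

lemma ww_pos: "ww r > 0"
  unfolding ww_def using zero_le_power2[of r] by linarith

lemma et_pos: "et r > 0"
  unfolding et_def using ww_pos[of r] by simp

lemma wA: "ww r powr (- aa - 1) = ww r * ww r powr (- aa - 2)"
proof -
  have "ww r * ww r powr (- aa - 2) = ww r powr (1 + (- aa - 2))"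
    using ww_pos[of r] by (intro powr_mult_base) simp
  also have "1 + (- aa - 2) = - aa - 1" by simp
  finally show ?thesis by simp
qed

lemma wC: "ww r powr (- aa - 1 - 1) = ww r powr (- aa - 2)"
  by (rule arg_cong[where f = "\<lambda>x. ww r powr x"]) simp

lemma rt_et: "rt (et r) = ww r powr (- aa - 2) * (c1 * ww r + c2)"
proof -
  have "et r powr n0 = ww r powr (- aa * n0)"
    unfolding et_def by (simp add: powr_powr)
  also have "- aa * n0 = - aa - 1" using aa_kk by (simp add: kk_def algebra_simps)
  finally have a: "et r powr n0 = ww r * ww r powr (- aa - 2)" using wA by simp
  have "et r powr kk = ww r powr (- aa * kk)"
    unfolding et_def by (simp add: powr_powr)
  also have "- aa * kk = - 1" using aa_kk by simp
  finally have b: "et r powr kk = 1 / ww r" using ww_pos[of r] by (simp add: powr_minus divide_inverse)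
  show ?thesis unfolding rt_def a b using ww_pos[of r] by (simp add: field_simps)
qed

lemma rh_pp: "rh (pp r) = rt (et r)"
  unfolding rh_def pp_def using EE_PP et_pos less_imp_le by metis

lemma dww: "(ww has_real_derivative 2 * r) (at r)"
  unfolding ww_def by (auto intro!: derivative_eq_intros)

lemma dmm: "(mm has_real_derivative
   (2 * aa * (3 * r^2)) * ww r powr (- aa - 1) + ((- aa - 1) * ww r powr (- aa - 1 - 1) * (2 * r)) * (2 * aa * r^3)) (at r)"
proof -
  have d1: "((\<lambda>r. ww r powr (- aa - 1)) has_real_derivative ((- aa - 1) * ww r powr (- aa - 1 - 1) * (2 * r))) (at r)"
    by (rule DERIV_chain2[OF has_real_derivative_powr[OF ww_pos] dww])
  have d2: "((\<lambda>r. 2 * aa * r^3) has_real_derivative 2 * aa * (3 * r^2)) (at r)"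
    by (auto intro!: derivative_eq_intros)
  show ?thesis using DERIV_mult[OF d2 d1] unfolding mm_def by simp
qed

lemma dpp: "(pp has_real_derivative rt (et r) * ((- aa) * ww r powr (- aa - 1) * (2 * r))) (at r)"
proof -
  have d1: "(et has_real_derivative ((- aa) * ww r powr (- aa - 1) * (2 * r))) (at r)"
    unfolding et_def by (rule DERIV_chain2[OF has_real_derivative_powr[OF ww_pos] dww])
  show ?thesis unfolding pp_def by (rule DERIV_chain2[OF PP_deriv[OF et_pos] d1])
qed

lemma mm_eq: "(2 * aa * (3 * r^2)) * ww r powr (- aa - 1) + ((- aa - 1) * ww r powr (- aa - 1 - 1) * (2 * r)) * (2 * aa * r^3)
   = 4 * pi * r\<^sup>2 * rh (pp r)"
proof -
  define W where "W = ww r powr (- aa - 2)"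
  have "(2 * aa * (3 * r^2)) * (ww r * W) + ((- aa - 1) * W * (2 * r)) * (2 * aa * r^3)
     = 4 * pi * r\<^sup>2 * (W * (c1 * ww r + c2))"
    by (simp add: c1_def c2_def ww_def field_simps power2_eq_square power3_eq_cube)
  then show ?thesis unfolding rh_pp rt_et wA wC W_def .
qed

lemma pp_eq: "r > 0 \<Longrightarrow> rt (et r) * ((- aa) * ww r powr (- aa - 1) * (2 * r)) = - mm r * rh (pp r) / r\<^sup>2"
  unfolding rh_pp mm_def by (simp add: field_simps power2_eq_square power3_eq_cube)

lemma sol: "regular_solution rh mm pp \<infinity>"
  unfolding regular_solution_def
proof (intro conjI allI impI)
  fix r :: real assume r: "r > 0"
  show "pp r > 0" unfolding pp_def by (rule PP_pos[OF et_pos])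
  show "(mm has_real_derivative 4 * pi * r\<^sup>2 * rh (pp r)) (at r)"
    using dmm[of r] unfolding mm_eq .
  show "(pp has_real_derivative - mm r * rh (pp r) / r\<^sup>2) (at r)"
    using dpp[of r] unfolding pp_eq[OF r] .
next
  have "isCont mm 0" using dmm by (rule DERIV_isCont)
  then have "(mm \<longlongrightarrow> 0) (at 0)" by (simp add: isCont_def mm_def)
  then show "(mm \<longlongrightarrow> 0) (at_right 0)" by (rule tendsto_within_subset) simp
next
  have "isCont pp 0" using dpp by (rule DERIV_isCont)
  then have "(pp \<longlongrightarrow> PP 1) (at 0)" by (simp add: isCont_def pp_def et_def ww_def)
  then have "(pp \<longlongrightarrow> PP 1) (at_right 0)" by (rule tendsto_within_subset) simp
  then show "\<exists>pc>0. (pp \<longlongrightarrow> pc) (at_right 0)" using PP_pos[of 1] by auto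
qed simp

lemma main: "\<exists>rho n1. asympt_polytropic rho n0 n1 \<and>
           (\<exists>m p. regular_solution rho m p \<infinity> \<and> (\<forall>r>0. p r > 0))"
  using ap sol PP_pos et_pos unfolding pp_def by blast

end

theorem theorem4:
  fixes n0 :: real
  assumes "n0 > 3"
  shows "\<exists>rho n1. asympt_polytropic rho n0 n1 \<and>
           (\<exists>m p. regular_solution rho m p \<infinity> \<and> (\<forall>r>0. p r > 0))"
  using main[OF assms] .

end
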